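(* Let $\mu$ be a bounded signed Borel measure on a Hausdorff space ${\mathscr X}$ and let ${\mathscr A}$ be a set of finite Borel partitions of ${\mathscr X}$, directed under refinement. Then $\alpha\mapsto\|\mu_\alpha\|_{1,\alpha}=\sum_{A\in\alpha}|\mu(A)|$ is monotone increasing on ${\mathscr A}$ (i.e. $\alpha\le\beta$ implies $\|\mu_\alpha\|_{1,\alpha}\le\|\mu_\beta\|_{1,\beta}$). If moreover ${\mathscr A}$ resolves ${\mathscr X}$, then $$\|\mu\|_{1}=|\mu|({\mathscr X})=\sup_{\alpha\in{\mathscr A}}\sum_{A\in\alpha}|\mu(A)|.$$
   Context: A (finite Borel) partition $\alpha$ of ${\mathscr X}$ is a finite collection of non-empty, pairwise disjoint Borel sets with union ${\mathscr X}$. $\alpha\le\beta$ means $\beta$ refines $\alpha$. ${\mathscr A}$ resolves ${\mathscr X}$ if the $\sigma$-algebra generated by all sets occurring in partitions of ${\mathscr A}$ is the Borel $\sigma$-algebra. For a signed measure $\mu$, $\mu_\alpha=(\mu(A))_{A\in\alpha}$ is its $\alpha$-histogram. *)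

theory Defs
  imports "HOL-Analysis.Analysis"
begin

text \<open>A real-valued signed Borel measure: countably additive on Borel sets.
  (Values on non-Borel sets are irrelevant.)\<close>
definition signed_borel_measure :: "('a::topological_space set \<Rightarrow> real) \<Rightarrow> bool" where
  "signed_borel_measure \<mu> \<longleftrightarrow>
     \<mu> {} = 0 \<and>
     (\<forall>A::nat \<Rightarrow> 'a set. range A \<subseteq> sets borel \<and> disjoint_family A \<longrightarrow>
        (\<lambda>i. \<mu> (A i)) sums \<mu> (\<Union>i. A i))"

definition total_variation :: "('a::topological_space set \<Rightarrow> real) \<Rightarrow> ennreal" where
  "total_variation \<mu> =
     (SUP A \<in> {A::nat \<Rightarrow> 'a set. range A \<subseteq> sets borel \<and> disjoint_family A \<and> (\<Union>i. A i) = UNIV}.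
        (\<Sum>i. ennreal \<bar>\<mu> (A i)\<bar>))"

definition borel_partition :: "'a::topological_space set set \<Rightarrow> bool" where
  "borel_partition \<alpha> \<longleftrightarrow> finite \<alpha> \<and> {} \<notin> \<alpha> \<and> \<alpha> \<subseteq> sets borel \<and>
     disjoint \<alpha> \<and> \<Union>\<alpha> = UNIV"

text \<open>refines alpha beta: alpha \<le> beta, i.e. beta refines alpha.\<close>
definition refines :: "'a set set \<Rightarrow> 'a set set \<Rightarrow> bool" where
  "refines \<alpha> \<beta> \<longleftrightarrow> (\<forall>B\<in>\<beta>. \<exists>A\<in>\<alpha>. B \<subseteq> A)"

definition directed_by_refinement :: "'a set set set \<Rightarrow> bool" where
  "directed_by_refinement \<A> \<longleftrightarrow> \<A> \<noteq> {} \<and>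
     (\<forall>\<alpha>\<in>\<A>. \<forall>\<beta>\<in>\<A>. \<exists>\<gamma>\<in>\<A>. refines \<alpha> \<gamma> \<and> refines \<beta> \<gamma>)"

definition resolves :: "'a::topological_space set set set \<Rightarrow> bool" where
  "resolves \<A> \<longleftrightarrow> sigma_sets UNIV (\<Union>\<A>) = sets borel"

end

theory Submission
  imports Defs
begin

lemma sbm_fa_nat:
  fixes I :: "nat set"
  assumes sbm: "signed_borel_measure \<mu>" and fin: "finite I"
    and dj: "disjoint_family_on D I" and B: "\<And>i. i \<in> I \<Longrightarrow> D i \<in> sets borel"
  shows "\<mu> (\<Union>i\<in>I. D i) = (\<Sum>i\<in>I. \<mu> (D i))"
proof -
  define D' where "D' i = (if i \<in> I then D i else {})" for i :: nat
  have r: "range D' \<subseteq> sets borel" using B by (auto simp: D'_def)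
  have d: "disjoint_family D'" using dj by (auto simp: D'_def disjoint_family_on_def)
  have s: "(\<lambda>i. \<mu> (D' i)) sums \<mu> (\<Union>i. D' i)"
    using sbm r d by (auto simp: signed_borel_measure_def)
  have e0: "\<mu> {} = 0" using sbm by (simp add: signed_borel_measure_def)
  have s2: "(\<lambda>i. \<mu> (D' i)) sums (\<Sum>i\<in>I. \<mu> (D' i))"
    by (rule sums_finite[OF fin]) (auto simp: D'_def e0)
  have u: "(\<Union>i. D' i) = (\<Union>i\<in>I. D i)" by (auto simp: D'_def split: if_splits)
  have "(\<Sum>i\<in>I. \<mu> (D' i)) = (\<Sum>i\<in>I. \<mu> (D i))" by (simp add: D'_def)
  with s s2 u show ?thesis using sums_unique2 by metis
qed

lemma sbm_fa_set:
  assumes sbm: "signed_borel_measure \<mu>" and fin: "finite F"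
    and dj: "disjoint F" and B: "F \<subseteq> sets borel"
  shows "\<mu> (\<Union>F) = (\<Sum>A\<in>F. \<mu> A)"
proof -
  obtain n f where F: "F = f ` {i::nat. i < n}" and inj: "inj_on f {i. i < n}"
    using finite_imp_nat_seg_image_inj_on[OF fin] by blast
  have dj2: "disjoint_family_on f {i. i < n}"
    unfolding disjoint_family_on_def
  proof (intro ballI impI)
    fix i j assume ij: "i \<in> {i. i < n}" "j \<in> {i. i < n}" "i \<noteq> j"
    hence "f i \<noteq> f j" using inj unfolding inj_on_def by blast
    moreover have "f i \<in> F" "f j \<in> F" using ij F by auto
    ultimately show "f i \<inter> f j = {}" using dj unfolding disjoint_def by blast
  qed
  have "\<mu> (\<Union>i\<in>{i. i < n}. f i) = (\<Sum>i\<in>{i. i < n}. \<mu> (f i))"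
    by (rule sbm_fa_nat[OF sbm _ dj2]) (use B F in auto)
  also have "\<dots> = (\<Sum>A\<in>F. \<mu> A)" unfolding F by (simp add: sum.reindex[OF inj])
  finally show ?thesis by (simp add: F)
qed

lemma sbm_add:
  assumes sbm: "signed_borel_measure \<mu>" and "A \<in> sets borel" "B \<in> sets borel" "A \<inter> B = {}"
  shows "\<mu> (A \<union> B) = \<mu> A + \<mu> B"
proof -
  define D where "D i = (if i = (0::nat) then A else B)" for i
  have "\<mu> (\<Union>i\<in>{0,1}. D i) = (\<Sum>i\<in>{0,1}. \<mu> (D i))"
    by (rule sbm_fa_nat[OF sbm]) (use assms in \<open>auto simp: D_def disjoint_family_on_def\<close>)
  moreover have "(\<Union>i\<in>{0,1}. D i) = A \<union> B" by (auto simp: D_def)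
  ultimately show ?thesis by (simp add: D_def)
qed

lemma sbm_compl:
  assumes sbm: "signed_borel_measure \<mu>" and "A \<in> sets borel"
  shows "\<mu> (- A) = \<mu> UNIV - \<mu> A"
proof -
  have "\<mu> (A \<union> - A) = \<mu> A + \<mu> (- A)"
    by (rule sbm_add[OF sbm]) (use assms in auto)
  moreover have "A \<union> - A = UNIV" by auto
  ultimately show ?thesis by simp
qed

lemma sbm_inc:
  assumes sbm: "signed_borel_measure \<mu>" and r: "range A \<subseteq> sets borel" and inc: "incseq A"
  shows "(\<lambda>n. \<mu> (A n)) \<longlonglongrightarrow> \<mu> (\<Union>i. A i)"
proof -
  have rD: "range (disjointed A) \<subseteq> sets borel"
    using sets.range_disjointed_sets[OF r] .
  have s: "(\<lambda>i. \<mu> (disjointed A i)) sums \<mu> (\<Union>i. disjointed A i)"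
    using sbm rD disjoint_family_disjointed by (auto simp: signed_borel_measure_def)
  hence s': "(\<lambda>n. \<Sum>i<n. \<mu> (disjointed A i)) \<longlonglongrightarrow> \<mu> (\<Union>i. A i)"
    by (simp add: sums_def UN_disjointed_eq)
  have eq: "(\<Sum>i<Suc n. \<mu> (disjointed A i)) = \<mu> (A n)" for n
  proof -
    have "(\<Sum>i<Suc n. \<mu> (disjointed A i)) = \<mu> (\<Union>i\<in>{..<Suc n}. disjointed A i)"
      using sbm_fa_nat[OF sbm finite_lessThan disjoint_family_on_mono[OF subset_UNIV disjoint_family_disjointed[of A]]] rD
      by auto
    also have "(\<Union>i\<in>{..<Suc n}. disjointed A i) = (\<Union>i\<in>{0..<Suc n}. A i)"
      using finite_UN_disjointed_eq[of A "Suc n"] by (simp add: atLeast0LessThan)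
    also have "\<dots> = A n" using inc by (force simp: incseq_def less_Suc_eq_le)
    finally show ?thesis .
  qed
  from s' have "(\<lambda>n. \<Sum>i<Suc n. \<mu> (disjointed A i)) \<longlonglongrightarrow> \<mu> (\<Union>i. A i)"
    by (rule LIMSEQ_Suc)
  thus ?thesis unfolding eq .
qed

lemma sbm_dec:
  assumes sbm: "signed_borel_measure \<mu>" and r: "range A \<subseteq> sets borel" and dec: "decseq A"
  shows "(\<lambda>n. \<mu> (A n)) \<longlonglongrightarrow> \<mu> (\<Inter>i. A i)"
proof -
  have r2: "range (\<lambda>n. - A n) \<subseteq> sets borel" using r by auto
  have inc: "incseq (\<lambda>n. - A n)" using dec by (auto simp: incseq_def decseq_def)
  have "(\<lambda>n. \<mu> (- A n)) \<longlonglongrightarrow> \<mu> (\<Union>i. - A i)" by (rule sbm_inc[OF sbm r2 inc])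
  hence "(\<lambda>n. \<mu> UNIV - \<mu> (- A n)) \<longlonglongrightarrow> \<mu> UNIV - \<mu> (\<Union>i. - A i)"
    by (intro tendsto_intros)
  moreover have "\<mu> UNIV - \<mu> (- A n) = \<mu> (A n)" for n
    using sbm_compl[OF sbm, of "A n"] r by auto
  moreover have "\<mu> UNIV - \<mu> (\<Union>i. - A i) = \<mu> (\<Inter>i. A i)"
  proof -
    have "(\<Union>i. - A i) = - (\<Inter>i. A i)" by auto
    moreover have "(\<Inter>i. A i) \<in> sets borel" using r by auto
    ultimately show ?thesis using sbm_compl[OF sbm, of "\<Inter>i. A i"] by simp
  qed
  ultimately show ?thesis by simp
qed


definition monoclosed :: "'a set set \<Rightarrow> bool" where
  "monoclosed M \<longleftrightarrow> (\<forall>A. range A \<subseteq> M \<and> incseq A \<longrightarrow> (\<Union>i. A i) \<in> M)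
     \<and> (\<forall>A. range A \<subseteq> M \<and> decseq A \<longrightarrow> (\<Inter>i. A i) \<in> M)"

lemma monotone_class:
  fixes G M :: "'a set set"
  assumes U: "UNIV \<in> G" and C: "\<And>a. a \<in> G \<Longrightarrow> - a \<in> G"
    and I: "\<And>a b. a \<in> G \<Longrightarrow> b \<in> G \<Longrightarrow> a \<inter> b \<in> G"
    and GM: "G \<subseteq> M" and mcM: "monoclosed M"
  shows "sigma_sets UNIV G \<subseteq> M"
proof -
  define m where "m = \<Inter>{M. G \<subseteq> M \<and> monoclosed M}"
  have Gm: "G \<subseteq> m" unfolding m_def by (rule Inter_greatest) simp
  have mM: "m \<subseteq> M" unfolding m_def using GM mcM by (intro Inter_lower) simp
  have least: "m \<subseteq> K" if "G \<subseteq> K" "monoclosed K" for K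
    unfolding m_def using that by (intro Inter_lower) simp
  have mU: "(\<Union>i. A i) \<in> m" if "range A \<subseteq> m" "incseq A" for A
    unfolding m_def
  proof (rule InterI)
    fix K assume K: "K \<in> {M. G \<subseteq> M \<and> monoclosed M}"
    hence "range A \<subseteq> K" using that(1) least by blast
    thus "(\<Union>i. A i) \<in> K" using K that(2) by (simp add: monoclosed_def)
  qed
  have mI: "(\<Inter>i. A i) \<in> m" if "range A \<subseteq> m" "decseq A" for A
    unfolding m_def
  proof (rule InterI)
    fix K assume K: "K \<in> {M. G \<subseteq> M \<and> monoclosed M}"
    hence "range A \<subseteq> K" using that(1) least by blast
    thus "(\<Inter>i. A i) \<in> K" using K that(2) by (simp add: monoclosed_def)
  qed
  have compl: "- a \<in> m" if "a \<in> m" for a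
  proof -
    define K where "K = {a \<in> m. - a \<in> m}"
    have "G \<subseteq> K" using Gm C unfolding K_def by blast
    moreover have "monoclosed K" unfolding monoclosed_def
    proof (intro conjI allI impI)
      fix A :: "nat \<Rightarrow> 'a set" assume a: "range A \<subseteq> K \<and> incseq A"
      have "(\<Union>i. A i) \<in> m" using a mU unfolding K_def by blast
      moreover have "(\<Inter>i. - A i) \<in> m"
        using a by (intro mI) (auto simp: K_def incseq_def decseq_def)
      moreover have "- (\<Union>i. A i) = (\<Inter>i. - A i)" by auto
      ultimately show "(\<Union>i. A i) \<in> K" unfolding K_def by (auto simp only: mem_Collect_eq)
    next
      fix A :: "nat \<Rightarrow> 'a set" assume a: "range A \<subseteq> K \<and> decseq A"
      have "(\<Inter>i. A i) \<in> m" using a mI unfolding K_def by blast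
      moreover have "(\<Union>i. - A i) \<in> m"
        using a by (intro mU) (auto simp: K_def incseq_def decseq_def)
      moreover have "- (\<Inter>i. A i) = (\<Union>i. - A i)" by auto
      ultimately show "(\<Inter>i. A i) \<in> K" unfolding K_def by (auto simp only: mem_Collect_eq)
    qed
    ultimately have "m \<subseteq> K" by (rule least)
    thus ?thesis using that unfolding K_def by blast
  qed
  have intK: "monoclosed {b \<in> m. a \<inter> b \<in> m}" for a
    unfolding monoclosed_def
  proof (intro conjI allI impI)
    fix A :: "nat \<Rightarrow> 'a set" assume h: "range A \<subseteq> {b \<in> m. a \<inter> b \<in> m} \<and> incseq A"
    have "(\<Union>i. A i) \<in> m" using h mU by blast
    moreover have "(\<Union>i. a \<inter> A i) \<in> m"
      using h by (intro mU) (auto simp: incseq_def)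
    moreover have "a \<inter> (\<Union>i. A i) = (\<Union>i. a \<inter> A i)" by auto
    ultimately show "(\<Union>i. A i) \<in> {b \<in> m. a \<inter> b \<in> m}" by (auto simp only: mem_Collect_eq)
  next
    fix A :: "nat \<Rightarrow> 'a set" assume h: "range A \<subseteq> {b \<in> m. a \<inter> b \<in> m} \<and> decseq A"
    have "(\<Inter>i. A i) \<in> m" using h mI by blast
    moreover have "(\<Inter>i. a \<inter> A i) \<in> m"
      using h by (intro mI) (auto simp: decseq_def)
    moreover have "a \<inter> (\<Inter>i. A i) = (\<Inter>i. a \<inter> A i)" by auto
    ultimately show "(\<Inter>i. A i) \<in> {b \<in> m. a \<inter> b \<in> m}" by (auto simp only: mem_Collect_eq)
  qed
  have int1: "a \<inter> b \<in> m" if "a \<in> G" "b \<in> m" for a b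
  proof -
    have "G \<subseteq> {b \<in> m. a \<inter> b \<in> m}" using that(1) Gm I by blast
    hence "m \<subseteq> {b \<in> m. a \<inter> b \<in> m}" using least intK by blast
    thus ?thesis using that by blast
  qed
  have int2: "a \<inter> b \<in> m" if "a \<in> m" "b \<in> m" for a b
  proof -
    have "G \<subseteq> {b \<in> m. a \<inter> b \<in> m}" using that(1) Gm int1 by (auto simp: Int_commute)
    hence "m \<subseteq> {b \<in> m. a \<inter> b \<in> m}" using least intK by blast
    thus ?thesis using that by blast
  qed
  have un2: "a \<union> b \<in> m" if "a \<in> m" "b \<in> m" for a b
  proof -
    have "- (- a \<inter> - b) \<in> m" using that compl int2 by blast
    thus ?thesis by simp
  qed
  have emp: "{} \<in> m" using compl[of UNIV] U Gm by auto
  have "x \<in> m" if "x \<in> sigma_sets UNIV G" for x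
    using that
  proof (induct rule: sigma_sets.induct)
    case (Basic a) thus ?case using Gm by blast
  next
    case Empty thus ?case by (rule emp)
  next
    case (Compl a) thus ?case using compl by (simp add: Compl_eq_Diff_UNIV[symmetric])
  next
    case (Union a)
    define B where "B n = (\<Union>i<n. a i)" for n
    have "B n \<in> m" for n
    proof (induct n)
      case 0 thus ?case using emp by (simp add: B_def)
    next
      case (Suc n)
      have "B (Suc n) = a n \<union> B n" by (auto simp: B_def lessThan_Suc)
      thus ?case using Suc Union un2 by simp
    qed
    moreover have "incseq B" by (rule incseq_SucI) (auto simp: B_def lessThan_Suc)
    ultimately have "(\<Union>n. B n) \<in> m" by (intro mU) auto
    moreover have "(\<Union>n. B n) = (\<Union>i. a i)" by (auto simp: B_def)
    ultimately show ?case by simp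
  qed
  thus ?thesis using mM by blast
qed


lemma refine_union:
  assumes da: "disjoint \<alpha>" and cg: "\<Union>\<gamma> = UNIV" and r: "refines \<alpha> \<gamma>" and S: "S \<subseteq> \<alpha>"
  shows "\<Union>S = \<Union>{C\<in>\<gamma>. \<exists>A\<in>S. C \<subseteq> A}"
proof
  show "\<Union>{C\<in>\<gamma>. \<exists>A\<in>S. C \<subseteq> A} \<subseteq> \<Union>S" by blast
next
  show "\<Union>S \<subseteq> \<Union>{C\<in>\<gamma>. \<exists>A\<in>S. C \<subseteq> A}"
  proof
    fix x assume "x \<in> \<Union>S"
    then obtain A where A: "A \<in> S" "x \<in> A" by blast
    have "x \<in> \<Union>\<gamma>" using cg by simp
    then obtain C where C: "C \<in> \<gamma>" "x \<in> C" by (rule UnionE)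
    obtain A' where A': "A' \<in> \<alpha>" "C \<subseteq> A'" using r C unfolding refines_def by blast
    have "A = A'"
    proof (rule ccontr)
      assume "A \<noteq> A'"
      hence "A \<inter> A' = {}" using da A(1) S A'(1) unfolding disjoint_def by blast
      thus False using A(2) C(2) A'(2) by blast
    qed
    hence "C \<in> {C\<in>\<gamma>. \<exists>A\<in>S. C \<subseteq> A}" using A A' C by auto
    thus "x \<in> \<Union>{C\<in>\<gamma>. \<exists>A\<in>S. C \<subseteq> A}" using C(2) by (rule UnionI)
  qed
qed

lemma refine_sum:
  assumes pa: "disjoint \<alpha>" and pb: "borel_partition \<beta>" and fa: "finite \<alpha>"
    and r: "refines \<alpha> \<beta>"
  shows "(\<Sum>B\<in>\<beta>. f B) = (\<Sum>A\<in>\<alpha>. \<Sum>B\<in>{B\<in>\<beta>. B \<subseteq> A}. f B)"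
proof -
  have fb: "finite \<beta>" and ne: "{} \<notin> \<beta>" using pb by (auto simp: borel_partition_def)
  have eq: "\<beta> = (\<Union>A\<in>\<alpha>. {B\<in>\<beta>. B \<subseteq> A})"
  proof
    show "\<beta> \<subseteq> (\<Union>A\<in>\<alpha>. {B\<in>\<beta>. B \<subseteq> A})"
    proof
      fix B assume B: "B \<in> \<beta>"
      then obtain A where "A \<in> \<alpha>" "B \<subseteq> A" using r unfolding refines_def by blast
      thus "B \<in> (\<Union>A\<in>\<alpha>. {B\<in>\<beta>. B \<subseteq> A})" using B by blast
    qed
  qed blast
  have "(\<Sum>B\<in>(\<Union>A\<in>\<alpha>. {B\<in>\<beta>. B \<subseteq> A}). f B) = (\<Sum>A\<in>\<alpha>. \<Sum>B\<in>{B\<in>\<beta>. B \<subseteq> A}. f B)"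
  proof (rule sum.UNION_disjoint[OF fa])
    show "\<forall>A\<in>\<alpha>. finite {B \<in> \<beta>. B \<subseteq> A}" using fb by auto
    show "\<forall>A\<in>\<alpha>. \<forall>A'\<in>\<alpha>. A \<noteq> A' \<longrightarrow> {B \<in> \<beta>. B \<subseteq> A} \<inter> {B \<in> \<beta>. B \<subseteq> A'} = {}"
    proof (intro ballI impI)
      fix A A' assume h: "A \<in> \<alpha>" "A' \<in> \<alpha>" "A \<noteq> A'"
      hence d: "A \<inter> A' = {}" using pa unfolding disjoint_def by blast
      show "{B \<in> \<beta>. B \<subseteq> A} \<inter> {B \<in> \<beta>. B \<subseteq> A'} = {}"
      proof (rule ccontr)
        assume "{B \<in> \<beta>. B \<subseteq> A} \<inter> {B \<in> \<beta>. B \<subseteq> A'} \<noteq> {}"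
        then obtain B where "B \<in> \<beta>" "B \<subseteq> A" "B \<subseteq> A'" by blast
        hence "B = {}" "B \<in> \<beta>" using d by auto
        thus False using ne by simp
      qed
    qed
  qed
  then show ?thesis by (simp only: eq[symmetric])
qed

lemma cell_measure:
  assumes sbm: "signed_borel_measure \<mu>" and pa: "borel_partition \<alpha>" and pb: "borel_partition \<beta>"
    and r: "refines \<alpha> \<beta>" and A: "A \<in> \<alpha>"
  shows "\<mu> A = (\<Sum>B\<in>{B\<in>\<beta>. B \<subseteq> A}. \<mu> B)"
proof -
  have "\<Union>{A} = \<Union>{C\<in>\<beta>. \<exists>A'\<in>{A}. C \<subseteq> A'}"
    by (rule refine_union) (use pa pb r A in \<open>auto simp: borel_partition_def\<close>)
  hence u: "A = \<Union>{C\<in>\<beta>. C \<subseteq> A}" by simp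
  have "\<mu> (\<Union>{C\<in>\<beta>. C \<subseteq> A}) = (\<Sum>B\<in>{B\<in>\<beta>. B \<subseteq> A}. \<mu> B)"
    by (rule sbm_fa_set[OF sbm]) (use pb in \<open>auto simp: borel_partition_def disjoint_def\<close>)
  with u show ?thesis by simp
qed

lemma mono_part:
  assumes sbm: "signed_borel_measure \<mu>" and pa: "borel_partition \<alpha>" and pb: "borel_partition \<beta>"
    and r: "refines \<alpha> \<beta>"
  shows "(\<Sum>A\<in>\<alpha>. \<bar>\<mu> A\<bar>) \<le> (\<Sum>B\<in>\<beta>. \<bar>\<mu> B\<bar>)"
proof -
  have "(\<Sum>A\<in>\<alpha>. \<bar>\<mu> A\<bar>) = (\<Sum>A\<in>\<alpha>. \<bar>\<Sum>B\<in>{B\<in>\<beta>. B \<subseteq> A}. \<mu> B\<bar>)"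
    using cell_measure[OF sbm pa pb r] by simp
  also have "\<dots> \<le> (\<Sum>A\<in>\<alpha>. \<Sum>B\<in>{B\<in>\<beta>. B \<subseteq> A}. \<bar>\<mu> B\<bar>)"
    by (intro sum_mono sum_abs)
  also have "\<dots> = (\<Sum>B\<in>\<beta>. \<bar>\<mu> B\<bar>)"
    by (rule refine_sum[symmetric]) (use pa pb r in \<open>auto simp: borel_partition_def\<close>)
  finally show ?thesis .
qed


lemma fin_le_tv:
  assumes sbm: "signed_borel_measure \<mu>" and pa: "borel_partition \<alpha>"
  shows "ennreal (\<Sum>A\<in>\<alpha>. \<bar>\<mu> A\<bar>) \<le> total_variation \<mu>"
proof -
  have fa: "finite \<alpha>" and B: "\<alpha> \<subseteq> sets borel" and da: "disjoint \<alpha>" and ua: "\<Union>\<alpha> = UNIV"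
    using pa by (auto simp: borel_partition_def)
  obtain n f where F: "\<alpha> = f ` {i::nat. i < n}" and inj: "inj_on f {i. i < n}"
    using finite_imp_nat_seg_image_inj_on[OF fa] by blast
  define A where "A i = (if i < n then f i else {})" for i
  have e0: "\<mu> {} = 0" using sbm by (simp add: signed_borel_measure_def)
  have r: "range A \<subseteq> sets borel" using B F by (auto simp: A_def)
  have d: "disjoint_family A"
    unfolding disjoint_family_on_def A_def
  proof (intro ballI impI)
    fix i j :: nat assume "i \<noteq> j"
    show "(if i < n then f i else {}) \<inter> (if j < n then f j else {}) = {}"
    proof (cases "i < n \<and> j < n")
      case True
      hence "f i \<noteq> f j" using inj \<open>i \<noteq> j\<close> unfolding inj_on_def by auto
      moreover have "f i \<in> \<alpha>" "f j \<in> \<alpha>" using True F by auto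
      ultimately have "f i \<inter> f j = {}" using da unfolding disjoint_def by blast
      thus ?thesis using True by simp
    qed auto
  qed
  have u: "(\<Union>i. A i) = UNIV"
  proof -
    have "(\<Union>i. A i) = \<Union>\<alpha>" unfolding F A_def by (auto split: if_splits)
    thus ?thesis using ua by simp
  qed
  have "(\<Sum>i. ennreal \<bar>\<mu> (A i)\<bar>) = (\<Sum>i\<in>{i. i < n}. ennreal \<bar>\<mu> (A i)\<bar>)"
    by (rule suminf_finite) (auto simp: A_def e0)
  also have "\<dots> = ennreal (\<Sum>i\<in>{i. i < n}. \<bar>\<mu> (f i)\<bar>)"
    by (simp add: A_def)
  also have "(\<Sum>i\<in>{i. i < n}. \<bar>\<mu> (f i)\<bar>) = (\<Sum>A\<in>\<alpha>. \<bar>\<mu> A\<bar>)"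
    unfolding F by (simp add: sum.reindex[OF inj])
  finally have eq: "(\<Sum>i. ennreal \<bar>\<mu> (A i)\<bar>) = ennreal (\<Sum>A\<in>\<alpha>. \<bar>\<mu> A\<bar>)" .
  show ?thesis unfolding total_variation_def eq[symmetric]
    by (rule SUP_upper) (use r d u in auto)
qed

lemma countable_part_bound:
  assumes sbm: "signed_borel_measure \<mu>"
    and M: "\<And>E. E \<in> sets borel \<Longrightarrow> 2 * \<mu> E - \<mu> UNIV \<le> s"
    and r: "range A \<subseteq> sets borel" and d: "disjoint_family A" and u: "(\<Union>i. A i) = UNIV"
  shows "(\<Sum>i. ennreal \<bar>\<mu> (A i)\<bar>) \<le> ennreal s"
proof -
  have e0: "\<mu> {} = 0" using sbm by (simp add: signed_borel_measure_def)
  define A1 where "A1 i = (if 0 \<le> \<mu> (A i) then A i else {})" for i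
  define A2 where "A2 i = (if 0 \<le> \<mu> (A i) then {} else A i)" for i
  have r1: "range A1 \<subseteq> sets borel" and r2: "range A2 \<subseteq> sets borel"
    using r by (auto simp: A1_def A2_def)
  have d1: "disjoint_family A1" and d2: "disjoint_family A2"
    using d by (auto simp: A1_def A2_def disjoint_family_on_def)
  have s1: "(\<lambda>i. \<mu> (A1 i)) sums \<mu> (\<Union>i. A1 i)"
    using sbm r1 d1 by (auto simp: signed_borel_measure_def)
  have s2: "(\<lambda>i. \<mu> (A2 i)) sums \<mu> (\<Union>i. A2 i)"
    using sbm r2 d2 by (auto simp: signed_borel_measure_def)
  define E where "E = (\<Union>i. A1 i)"
  have EB: "E \<in> sets borel" unfolding E_def using r1 by (rule sets.countable_UN)
  have E2: "(\<Union>i. A2 i) = - E"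
  proof
    show "(\<Union>i. A2 i) \<subseteq> - E"
    proof
      fix x assume "x \<in> (\<Union>i. A2 i)"
      then obtain i where i: "x \<in> A i" "\<not> 0 \<le> \<mu> (A i)" by (auto simp: A2_def split: if_splits)
      have "x \<notin> A1 j" for j
      proof (cases "j = i")
        case True thus ?thesis using i by (simp add: A1_def)
      next
        case False thus ?thesis using d i unfolding disjoint_family_on_def A1_def by auto
      qed
      thus "x \<in> - E" by (auto simp: E_def)
    qed
  next
    show "- E \<subseteq> (\<Union>i. A2 i)"
    proof
      fix x assume x: "x \<in> - E"
      obtain i where i: "x \<in> A i" using u by blast
      have "\<not> 0 \<le> \<mu> (A i)" using x i by (auto simp: E_def A1_def)
      thus "x \<in> (\<Union>i. A2 i)" using i by (auto simp: A2_def)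
    qed
  qed
  have abs: "\<bar>\<mu> (A i)\<bar> = \<mu> (A1 i) - \<mu> (A2 i)" for i
    by (auto simp: A1_def A2_def e0)
  have sa: "(\<lambda>i. \<bar>\<mu> (A i)\<bar>) sums (\<mu> E - \<mu> (- E))"
    unfolding abs using sums_diff[OF s1 s2] E2 by (simp add: E_def)
  have "(\<Sum>i. ennreal \<bar>\<mu> (A i)\<bar>) = ennreal (\<Sum>i. \<bar>\<mu> (A i)\<bar>)"
    by (rule suminf_ennreal2) (use sa in \<open>auto simp: sums_iff\<close>)
  also have "(\<Sum>i. \<bar>\<mu> (A i)\<bar>) = \<mu> E - \<mu> (- E)" using sa by (simp add: sums_iff)
  also have "\<dots> = 2 * \<mu> E - \<mu> UNIV" using sbm_compl[OF sbm EB] by simp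
  finally show ?thesis using M[OF EB] by (simp add: ennreal_leI)
qed

lemma compl_part:
  fixes \<alpha> S' :: "'a set set"
  assumes ua: "\<Union>\<alpha> = UNIV" and da: "disjoint \<alpha>" and sub: "S' \<subseteq> \<alpha>"
  shows "- (\<Union>S') = \<Union>(\<alpha> - S')"
proof
  show "- (\<Union>S') \<subseteq> \<Union>(\<alpha> - S')"
  proof
    fix x assume x: "x \<in> - (\<Union>S')"
    have "x \<in> \<Union>\<alpha>" using ua by simp
    then obtain A where A: "A \<in> \<alpha>" "x \<in> A" by (rule UnionE)
    have "A \<notin> S'" using x A by blast
    thus "x \<in> \<Union>(\<alpha> - S')" using A by blast
  qed
next
  show "\<Union>(\<alpha> - S') \<subseteq> - (\<Union>S')"
  proof
    fix x assume "x \<in> \<Union>(\<alpha> - S')"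
    then obtain A where A: "A \<in> \<alpha>" "A \<notin> S'" "x \<in> A" by blast
    show "x \<in> - (\<Union>S')"
    proof
      assume "x \<in> \<Union>S'"
      then obtain B where B: "B \<in> S'" "x \<in> B" by blast
      have "B \<in> \<alpha>" "A \<noteq> B" using B A sub by auto
      hence "A \<inter> B = {}" using da A(1) unfolding disjoint_def by blast
      thus False using A B by blast
    qed
  qed
qed

theorem mainTheorem2:
  fixes \<mu> :: "'a::t2_space set \<Rightarrow> real"
    and \<A> :: "'a set set set"
  assumes "signed_borel_measure \<mu>"
    and "total_variation \<mu> < \<infinity>"
    and "\<forall>\<alpha>\<in>\<A>. borel_partition \<alpha>"
    and "directed_by_refinement \<A>"
  shows "(\<forall>\<alpha>\<in>\<A>. \<forall>\<beta>\<in>\<A>. refines \<alpha> \<beta> \<longrightarrow>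
            (\<Sum>A\<in>\<alpha>. \<bar>\<mu> A\<bar>) \<le> (\<Sum>B\<in>\<beta>. \<bar>\<mu> B\<bar>))
       \<and> (resolves \<A> \<longrightarrow>
            total_variation \<mu> = (SUP \<alpha>\<in>\<A>. ennreal (\<Sum>A\<in>\<alpha>. \<bar>\<mu> A\<bar>)))"
proof (intro conjI impI ballI)
  note sbm = assms(1) and part = assms(3) and dir = assms(4)
  show "(\<Sum>A\<in>\<alpha>. \<bar>\<mu> A\<bar>) \<le> (\<Sum>B\<in>\<beta>. \<bar>\<mu> B\<bar>)"
    if "\<alpha> \<in> \<A>" "\<beta> \<in> \<A>" "refines \<alpha> \<beta>" for \<alpha> \<beta>
    using mono_part[OF sbm] part that by blast
next
  note sbm = assms(1) and part = assms(3) and dir = assms(4)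
  assume res: "resolves \<A>"
  define S where "S = (SUP \<alpha>\<in>\<A>. ennreal (\<Sum>A\<in>\<alpha>. \<bar>\<mu> A\<bar>))"
  have ST: "S \<le> total_variation \<mu>"
    unfolding S_def by (rule SUP_least) (use fin_le_tv[OF sbm] part in blast)
  hence Sfin: "S < top" using assms(2) by (simp add: le_less_trans)
  define s where "s = enn2real S"
  have s0: "0 \<le> s" by (simp add: s_def)
  have Ss: "S = ennreal s" using Sfin by (simp add: s_def)
  have bound: "(\<Sum>A\<in>\<alpha>. \<bar>\<mu> A\<bar>) \<le> s" if "\<alpha> \<in> \<A>" for \<alpha>
  proof -
    have "ennreal (\<Sum>A\<in>\<alpha>. \<bar>\<mu> A\<bar>) \<le> S" unfolding S_def using that by (rule SUP_upper)
    thus ?thesis using s0 by (simp add: Ss)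
  qed
  have ne: "\<A> \<noteq> {}" using dir by (simp add: directed_by_refinement_def)
  define G where "G = {\<Union>S' | S' \<alpha>. \<alpha> \<in> \<A> \<and> S' \<subseteq> \<alpha>}"
  define M where "M = {E \<in> sets borel. 2 * \<mu> E - \<mu> UNIV \<le> s}"
  have cplG: "- (\<Union>S') = \<Union>(\<alpha> - S')" if "\<alpha> \<in> \<A>" "S' \<subseteq> \<alpha>" for \<alpha> S'
    by (rule compl_part) (use part that in \<open>auto simp: borel_partition_def\<close>)
  have Gin: "\<Union>S' \<in> G" if "\<alpha> \<in> \<A>" "S' \<subseteq> \<alpha>" for S' \<alpha>
    unfolding G_def using that by blast
  have Gout: "\<exists>S' \<alpha>. a = \<Union>S' \<and> \<alpha> \<in> \<A> \<and> S' \<subseteq> \<alpha>" if "a \<in> G" for a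
    using that unfolding G_def by blast
  have UG: "UNIV \<in> G"
  proof -
    obtain \<alpha> where a: "\<alpha> \<in> \<A>" using ne by blast
    have "\<Union>\<alpha> = UNIV" using part a by (simp add: borel_partition_def)
    moreover have "\<Union>\<alpha> \<in> G" using Gin[OF a order_refl] .
    ultimately show ?thesis by simp
  qed
  have CG: "- a \<in> G" if aG: "a \<in> G" for a
  proof -
    obtain S' \<alpha> where h: "a = \<Union>S'" "\<alpha> \<in> \<A>" "S' \<subseteq> \<alpha>" using Gout[OF aG] by blast
    have "- a = \<Union>(\<alpha> - S')" using cplG h by simp
    moreover have "\<Union>(\<alpha> - S') \<in> G" using Gin[OF h(2)] by blast
    ultimately show ?thesis by simp
  qed
  have IG: "a \<inter> b \<in> G" if aG: "a \<in> G" and bG: "b \<in> G" for a b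
  proof -
    obtain S1 \<alpha> where h1: "a = \<Union>S1" "\<alpha> \<in> \<A>" "S1 \<subseteq> \<alpha>" using Gout[OF aG] by blast
    obtain S2 \<beta> where h2: "b = \<Union>S2" "\<beta> \<in> \<A>" "S2 \<subseteq> \<beta>" using Gout[OF bG] by blast
    obtain \<gamma> where g: "\<gamma> \<in> \<A>" "refines \<alpha> \<gamma>" "refines \<beta> \<gamma>"
      using dir h1 h2 unfolding directed_by_refinement_def by blast
    have pa: "borel_partition \<alpha>" and pb: "borel_partition \<beta>" and pg: "borel_partition \<gamma>"
      using part h1 h2 g by auto
    have ea: "a = \<Union>{C\<in>\<gamma>. \<exists>A\<in>S1. C \<subseteq> A}"
      unfolding h1 by (rule refine_union) (use pa pg g h1 in \<open>auto simp: borel_partition_def\<close>)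
    have eb: "b = \<Union>{C\<in>\<gamma>. \<exists>A\<in>S2. C \<subseteq> A}"
      unfolding h2 by (rule refine_union) (use pb pg g h2 in \<open>auto simp: borel_partition_def\<close>)
    have dg: "disjoint \<gamma>" using pg by (simp add: borel_partition_def)
    have key: "\<Union>{C\<in>\<gamma>. \<exists>A\<in>S1. C \<subseteq> A} \<inter> \<Union>{C\<in>\<gamma>. \<exists>A\<in>S2. C \<subseteq> A}
       = \<Union>{C\<in>\<gamma>. (\<exists>A\<in>S1. C \<subseteq> A) \<and> (\<exists>A\<in>S2. C \<subseteq> A)}"
    proof
      show "\<Union>{C\<in>\<gamma>. \<exists>A\<in>S1. C \<subseteq> A} \<inter> \<Union>{C\<in>\<gamma>. \<exists>A\<in>S2. C \<subseteq> A}
         \<subseteq> \<Union>{C\<in>\<gamma>. (\<exists>A\<in>S1. C \<subseteq> A) \<and> (\<exists>A\<in>S2. C \<subseteq> A)}"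
      proof
        fix x assume x: "x \<in> \<Union>{C\<in>\<gamma>. \<exists>A\<in>S1. C \<subseteq> A} \<inter> \<Union>{C\<in>\<gamma>. \<exists>A\<in>S2. C \<subseteq> A}"
        then obtain C1 where c1: "C1 \<in> \<gamma>" "\<exists>A\<in>S1. C1 \<subseteq> A" "x \<in> C1" by blast
        from x obtain C2 where c2: "C2 \<in> \<gamma>" "\<exists>A\<in>S2. C2 \<subseteq> A" "x \<in> C2" by blast
        have "C1 = C2"
        proof (rule ccontr)
          assume "C1 \<noteq> C2"
          hence "C1 \<inter> C2 = {}" using dg c1(1) c2(1) unfolding disjoint_def by blast
          thus False using c1(3) c2(3) by blast
        qed
        thus "x \<in> \<Union>{C\<in>\<gamma>. (\<exists>A\<in>S1. C \<subseteq> A) \<and> (\<exists>A\<in>S2. C \<subseteq> A)}" using c1 c2 by blast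
      qed
    next
      show "\<Union>{C\<in>\<gamma>. (\<exists>A\<in>S1. C \<subseteq> A) \<and> (\<exists>A\<in>S2. C \<subseteq> A)}
        \<subseteq> \<Union>{C\<in>\<gamma>. \<exists>A\<in>S1. C \<subseteq> A} \<inter> \<Union>{C\<in>\<gamma>. \<exists>A\<in>S2. C \<subseteq> A}"
        by blast
    qed
    have "a \<inter> b = \<Union>{C\<in>\<gamma>. (\<exists>A\<in>S1. C \<subseteq> A) \<and> (\<exists>A\<in>S2. C \<subseteq> A)}"
      by (subst ea, subst eb, rule key)
    moreover have "\<Union>{C\<in>\<gamma>. (\<exists>A\<in>S1. C \<subseteq> A) \<and> (\<exists>A\<in>S2. C \<subseteq> A)} \<in> G"
      by (rule Gin[OF g(1)]) auto
    ultimately show ?thesis by simp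
  qed
  have GM: "G \<subseteq> M"
  proof
    fix E assume "E \<in> G"
    obtain S' \<alpha> where h: "E = \<Union>S'" "\<alpha> \<in> \<A>" "S' \<subseteq> \<alpha>" using Gout[OF \<open>E \<in> G\<close>] by blast
    have pa: "borel_partition \<alpha>" using part h by auto
    have fa: "finite \<alpha>" and B: "\<alpha> \<subseteq> sets borel" and da: "disjoint \<alpha>"
      using pa by (auto simp: borel_partition_def)
    have fS: "finite S'" using finite_subset[OF h(3) fa] .
    have EB: "E \<in> sets borel" unfolding h(1) using fS h B by (intro sets.finite_Union) auto
    have m1: "\<mu> E = (\<Sum>A\<in>S'. \<mu> A)" unfolding h(1)
      by (rule sbm_fa_set[OF sbm fS]) (use da h B in \<open>auto simp: disjoint_def\<close>)
    have m2: "\<mu> (- E) = (\<Sum>A\<in>\<alpha> - S'. \<mu> A)" unfolding h(1) cplG[OF h(2,3)]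
      by (rule sbm_fa_set[OF sbm]) (use fa da h B in \<open>auto simp: disjoint_def\<close>)
    have "2 * \<mu> E - \<mu> UNIV = \<mu> E - \<mu> (- E)" using sbm_compl[OF sbm EB] by simp
    also have "\<dots> \<le> (\<Sum>A\<in>S'. \<bar>\<mu> A\<bar>) + (\<Sum>A\<in>\<alpha> - S'. \<bar>\<mu> A\<bar>)"
    proof -
      have "(\<Sum>A\<in>S'. \<mu> A) \<le> (\<Sum>A\<in>S'. \<bar>\<mu> A\<bar>)" by (intro sum_mono) simp
      moreover have "- (\<Sum>A\<in>\<alpha> - S'. \<mu> A) \<le> (\<Sum>A\<in>\<alpha> - S'. \<bar>\<mu> A\<bar>)"
        unfolding sum_negf[symmetric] by (intro sum_mono) simp
      ultimately show ?thesis unfolding m1 m2 by simp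
    qed
    also have "\<dots> = (\<Sum>A\<in>\<alpha>. \<bar>\<mu> A\<bar>)"
      using sum.subset_diff[OF h(3) fa, of "\<lambda>A. \<bar>\<mu> A\<bar>"] by simp
    also have "\<dots> \<le> s" using bound h by simp
    finally show "E \<in> M" using EB by (simp add: M_def)
  qed
  have mcM: "monoclosed M" unfolding monoclosed_def
  proof (intro conjI allI impI)
    fix A :: "nat \<Rightarrow> 'a set" assume a: "range A \<subseteq> M \<and> incseq A"
    hence r: "range A \<subseteq> sets borel" by (auto simp: M_def)
    have UB: "(\<Union>i. A i) \<in> sets borel" using r by (rule sets.countable_UN)
    have "(\<lambda>n. 2 * \<mu> (A n) - \<mu> UNIV) \<longlonglongrightarrow> 2 * \<mu> (\<Union>i. A i) - \<mu> UNIV"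
      using sbm_inc[OF sbm r] a by (intro tendsto_intros) auto
    moreover have "\<forall>n\<ge>0. 2 * \<mu> (A n) - \<mu> UNIV \<le> s" using a by (auto simp: M_def)
    ultimately have "2 * \<mu> (\<Union>i. A i) - \<mu> UNIV \<le> s" by (intro LIMSEQ_le_const2) blast+
    thus "(\<Union>i. A i) \<in> M" using UB by (simp add: M_def)
  next
    fix A :: "nat \<Rightarrow> 'a set" assume a: "range A \<subseteq> M \<and> decseq A"
    hence r: "range A \<subseteq> sets borel" by (auto simp: M_def)
    have UB: "(\<Inter>i. A i) \<in> sets borel" using r by (intro sets.countable_INT) auto
    have "(\<lambda>n. 2 * \<mu> (A n) - \<mu> UNIV) \<longlonglongrightarrow> 2 * \<mu> (\<Inter>i. A i) - \<mu> UNIV"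
      using sbm_dec[OF sbm r] a by (intro tendsto_intros) auto
    moreover have "\<forall>n\<ge>0. 2 * \<mu> (A n) - \<mu> UNIV \<le> s" using a by (auto simp: M_def)
    ultimately have "2 * \<mu> (\<Inter>i. A i) - \<mu> UNIV \<le> s" by (intro LIMSEQ_le_const2) blast+
    thus "(\<Inter>i. A i) \<in> M" using UB by (simp add: M_def)
  qed
  have "sets borel = sigma_sets UNIV (\<Union>\<A>)" using res by (simp add: resolves_def)
  also have "\<dots> \<subseteq> sigma_sets UNIV G"
  proof (rule sigma_sets_mono')
    show "\<Union>\<A> \<subseteq> G"
    proof
      fix A assume "A \<in> \<Union>\<A>"
      then obtain \<alpha> where "\<alpha> \<in> \<A>" "A \<in> \<alpha>" by blast
      hence "\<Union>{A} \<in> G" using Gin by blast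
      thus "A \<in> G" by simp
    qed
  qed
  also have "\<dots> \<subseteq> M" by (rule monotone_class[OF UG CG IG GM mcM])
  finally have BM: "sets borel \<subseteq> M" .
  have TS: "total_variation \<mu> \<le> S"
    unfolding total_variation_def Ss
  proof (rule SUP_least)
    fix A :: "nat \<Rightarrow> 'a set"
    assume "A \<in> {A. range A \<subseteq> sets borel \<and> disjoint_family A \<and> (\<Union>i. A i) = UNIV}"
    hence h: "range A \<subseteq> sets borel" "disjoint_family A" "(\<Union>i. A i) = UNIV" by auto
    show "(\<Sum>i. ennreal \<bar>\<mu> (A i)\<bar>) \<le> ennreal s"
      by (rule countable_part_bound[OF sbm _ h]) (use BM in \<open>auto simp: M_def\<close>)
  qed
  show "total_variation \<mu> = (SUP \<alpha>\<in>\<A>. ennreal (\<Sum>A\<in>\<alpha>. \<bar>\<mu> A\<bar>))"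
    using ST TS unfolding S_def by (rule antisym[rotated])
qed

end
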